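(* Let $m\ge 2$ be even, $n\ge 1$, and let $\mathcal{T}=(t_{i_1 i_2\cdots i_m})\in\mathbb{R}^{[m,n]}$ be a Nekrasov $Z$ tensor all of whose diagonal elements $t_{i i\cdots i}$ ($i\in[n]$) are positive. Then $\mathcal{T}$ is a $P$-tensor, i.e. for every $x\in\mathbb{R}^n\setminus\{0\}$ there exists $j\in[n]$ with $x_j\neq 0$ and $x_j(\mathcal{T}x^{m-1})_j>0$.
   Context: $[n]=\{1,\dots,n\}$ and $\mathbb{R}^{[m,n]}$ denotes the set of real tensors $\mathcal{T}=(t_{i_1\cdots i_m})$ with $i_1,\dots,i_m\in[n]$ (order $m$, dimension $n$). For $x\in\mathbb{R}^n$, $(\mathcal{T}x^{m-1})_i=\sum_{i_2,\dots,i_m=1}^n t_{i i_2\cdots i_m}x_{i_2}\cdots x_{i_m}$. A diagonal element is $t_{i\cdots i}$; all other entries are off-diagonal. $\mathcal{T}$ is a $Z$ tensor if all its off-diagonal entries are nonpositive. For $\mathcal{T}$ with $t_{i\cdots i}\neq 0$ for all $i$, define $R_i(\mathcal{T})=\sum_{(i_2,\dots,i_m)\neq(i,\dots,i)}|t_{i i_2\cdots i_m}|$, $\Lambda_1(\mathcal{T})=R_1(\mathcal{T})$, and for $i=2,\dots,n$ $$\Lambda_i(\mathcal{T})=\sum_{(i_2,\dots,i_m)\in[i-1]^{m-1}}|t_{i i_2\cdots i_m}|\Big(\tfrac{\Lambda_{i_2}(\mathcal{T})}{|t_{i_2\cdots i_2}|}\Big)^{\frac{1}{m-1}}\cdots\Big(\tfrac{\Lambda_{i_m}(\mathcal{T})}{|t_{i_m\cdots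 i_m}|}\Big)^{\frac{1}{m-1}}+\sum_{(i_2,\dots,i_m)\notin[i-1]^{m-1},\ (i_2,\dots,i_m)\neq(i,\dots,i)}|t_{i i_2\cdots i_m}|.$$ $\mathcal{T}$ is a Nekrasov tensor if $|t_{i\cdots i}|>\Lambda_i(\mathcal{T})$ for all $i\in[n]$. A Nekrasov $Z$ tensor is a tensor that is both a Nekrasov tensor and a $Z$ tensor. *)

theory Defs
  imports Main "HOL-Analysis.Analysis"
begin

text \<open>A real tensor of order m and dimension n is modelled as a function
  T :: nat list => real; the entry t_{i_1...i_m} is T [i_1,...,i_m], with
  indices in {1..n}. Values of T on other lists are irrelevant.\<close>

definition tuples :: "nat \<Rightarrow> nat \<Rightarrow> nat list set" where
  "tuples k n = {js. length js = k \<and> set js \<subseteq> {1..n}}"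

definition tensor_apply :: "(nat list \<Rightarrow> real) \<Rightarrow> nat \<Rightarrow> nat \<Rightarrow> (nat \<Rightarrow> real) \<Rightarrow> nat \<Rightarrow> real" where
  "tensor_apply T m n x i = (\<Sum>js\<in>tuples (m - 1) n. T (i # js) * prod_list (map x js))"

definition diag :: "(nat list \<Rightarrow> real) \<Rightarrow> nat \<Rightarrow> nat \<Rightarrow> real" where
  "diag T m i = T (replicate m i)"

definition is_Z_tensor :: "(nat list \<Rightarrow> real) \<Rightarrow> nat \<Rightarrow> nat \<Rightarrow> bool" where
  "is_Z_tensor T m n \<longleftrightarrow>
     (\<forall>is\<in>tuples m n. (\<forall>i. is \<noteq> replicate m i) \<longrightarrow> T is \<le> 0)"

definition R_row :: "(nat list \<Rightarrow> real) \<Rightarrow> nat \<Rightarrow> nat \<Rightarrow> nat \<Rightarrow> real" where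
  "R_row T m n i = (\<Sum>js\<in>tuples (m - 1) n - {replicate (m - 1) i}. \<bar>T (i # js)\<bar>)"

primrec Lambda_list :: "(nat list \<Rightarrow> real) \<Rightarrow> nat \<Rightarrow> nat \<Rightarrow> nat \<Rightarrow> real list" where
  "Lambda_list T m n 0 = []"
| "Lambda_list T m n (Suc k) =
     (let L = Lambda_list T m n k; i = Suc k in
      L @ [if i = 1 then R_row T m n 1 else
        (\<Sum>js\<in>tuples (m - 1) (i - 1).
            \<bar>T (i # js)\<bar> *
            prod_list (map (\<lambda>j. (L ! (j - 1) / \<bar>diag T m j\<bar>) powr (1 / real (m - 1))) js))
        + (\<Sum>js\<in>tuples (m - 1) n - tuples (m - 1) (i - 1) - {replicate (m - 1) i}.
            \<bar>T (i # js)\<bar>)])"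

definition Lambda :: "(nat list \<Rightarrow> real) \<Rightarrow> nat \<Rightarrow> nat \<Rightarrow> nat \<Rightarrow> real" where
  "Lambda T m n i = Lambda_list T m n i ! (i - 1)"

definition is_Nekrasov :: "(nat list \<Rightarrow> real) \<Rightarrow> nat \<Rightarrow> nat \<Rightarrow> bool" where
  "is_Nekrasov T m n \<longleftrightarrow>
     (\<forall>i\<in>{1..n}. diag T m i \<noteq> 0) \<and> (\<forall>i\<in>{1..n}. \<bar>diag T m i\<bar> > Lambda T m n i)"

definition is_P_tensor :: "(nat list \<Rightarrow> real) \<Rightarrow> nat \<Rightarrow> nat \<Rightarrow> bool" where
  "is_P_tensor T m n \<longleftrightarrow>
     (\<forall>x :: nat \<Rightarrow> real. (\<exists>i\<in>{1..n}. x i \<noteq> 0) \<longrightarrow>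
        (\<exists>j\<in>{1..n}. x j \<noteq> 0 \<and> x j * tensor_apply T m n x j > 0))"

end

theory Submission
  imports Defs
begin

lemma finite_tuples: "finite (tuples k n)"
proof -
  have "tuples k n \<subseteq> {xs. set xs \<subseteq> {1..n} \<and> length xs = k}" by (auto simp: tuples_def)
  thus ?thesis using finite_lists_length_eq[of "{1..n}" k] finite_subset by fastforce
qed

lemma tuples_zero: "k \<ge> 1 \<Longrightarrow> tuples k 0 = {}"
  by (auto simp: tuples_def)

lemma Lambda_list_length: "length (Lambda_list T m n k) = k"
  by (induct k) (auto simp: Let_def)

lemma Lambda_list_nth: "1 \<le> j \<Longrightarrow> j \<le> k \<Longrightarrow> Lambda_list T m n k ! (j - 1) = Lambda T m n j"
proof (induct k)
  case 0 then show ?case by simp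
next
  case (Suc k)
  show ?case
  proof (cases "j = Suc k")
    case True then show ?thesis by (simp add: Lambda_def)
  next
    case False
    then have "j \<le> k" using Suc by simp
    then show ?thesis using Suc Lambda_list_length[of T m n k]
      by (simp add: Let_def nth_append)
  qed
qed

lemma Lambda_eq:
  assumes "m \<ge> 2" "1 \<le> i"
  shows "Lambda T m n i =
    (\<Sum>js\<in>tuples (m - 1) (i - 1). \<bar>T (i # js)\<bar> *
       prod_list (map (\<lambda>j. (Lambda T m n j / \<bar>diag T m j\<bar>) powr (1 / real (m - 1))) js))
    + (\<Sum>js\<in>tuples (m - 1) n - tuples (m - 1) (i - 1) - {replicate (m - 1) i}. \<bar>T (i # js)\<bar>)"
proof (cases "i = 1")
  case True
  then show ?thesis using assms tuples_zero[of "m-1"]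
    by (simp add: Lambda_def R_row_def)
next
  case False
  then obtain k where k: "i = Suc k" "k \<ge> 1" using assms by (cases i) auto
  have "(\<Sum>js\<in>tuples (m - 1) (i - 1). \<bar>T (i # js)\<bar> *
       prod_list (map (\<lambda>j. (Lambda_list T m n k ! (j - 1) / \<bar>diag T m j\<bar>) powr (1 / real (m - 1))) js))
     = (\<Sum>js\<in>tuples (m - 1) (i - 1). \<bar>T (i # js)\<bar> *
       prod_list (map (\<lambda>j. (Lambda T m n j / \<bar>diag T m j\<bar>) powr (1 / real (m - 1))) js))"
  proof (rule sum.cong[OF refl])
    fix js assume "js \<in> tuples (m - 1) (i - 1)"
    then have "set js \<subseteq> {1..k}" using k by (simp add: tuples_def)
    then have "map (\<lambda>j. (Lambda_list T m n k ! (j - 1) / \<bar>diag T m j\<bar>) powr (1 / real (m - 1))) js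
      = map (\<lambda>j. (Lambda T m n j / \<bar>diag T m j\<bar>) powr (1 / real (m - 1))) js"
      by (intro map_cong refl, subst Lambda_list_nth) auto
    then show "\<bar>T (i # js)\<bar> *
       prod_list (map (\<lambda>j. (Lambda_list T m n k ! (j - 1) / \<bar>diag T m j\<bar>) powr (1 / real (m - 1))) js)
     = \<bar>T (i # js)\<bar> *
       prod_list (map (\<lambda>j. (Lambda T m n j / \<bar>diag T m j\<bar>) powr (1 / real (m - 1))) js)" by (simp only:)
  qed
  then show ?thesis using k Lambda_list_length[of T m n k]
    by (simp add: Lambda_def Let_def nth_append)
qed

lemma prod_abs: "prod_list (map (\<lambda>k. \<bar>x k\<bar>) js) = \<bar>prod_list (map x js)\<bar>" for x :: "nat \<Rightarrow> real"
  by (induct js) (auto simp: abs_mult)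

lemma row_bound:
  fixes x :: "nat \<Rightarrow> real"
  assumes m: "m \<ge> 2" "even m" and d: "diag T m i > 0" and i: "i \<in> {1..n}"
    and H: "x i \<noteq> 0 \<longrightarrow> x i * tensor_apply T m n x i \<le> 0"
  shows "\<bar>x i\<bar>^(m-1) * diag T m i \<le>
    (\<Sum>js\<in>tuples (m-1) n - {replicate (m-1) i}. \<bar>T (i#js)\<bar> * prod_list (map (\<lambda>k. \<bar>x k\<bar>) js))"
    (is "?L \<le> ?R")
proof -
  obtain k where k: "m = Suc k" using m by (cases m) auto
  define S where "S = tuples (m-1) n"
  define r where "r = replicate (m-1) i"
  define off where "off = (\<Sum>js\<in>S - {r}. T (i#js) * prod_list (map x js))"
  have rS: "r \<in> S" using i by (auto simp: S_def r_def tuples_def)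
  have rep: "replicate m i = i # r" by (simp add: r_def k)
  have ta: "tensor_apply T m n x i = diag T m i * x i^(m-1) + off"
    unfolding tensor_apply_def S_def[symmetric] off_def
    using sum.remove[OF finite_tuples rS[unfolded S_def], of "\<lambda>js. T (i#js) * prod_list (map x js)"]
    by (simp add: S_def diag_def rep r_def prod_list_replicate)
  have offb: "\<bar>off\<bar> \<le> ?R"
    unfolding off_def S_def[symmetric] r_def[symmetric]
    by (rule order_trans[OF sum_abs]) (simp add: abs_mult prod_abs)
  have Rnn: "0 \<le> ?R" by (intro sum_nonneg) (simp add: prod_abs)
  show ?thesis
  proof (cases "x i = 0")
    case True then show ?thesis using k m Rnn by (cases k) auto
  next
    case False
    have xm: "x i * x i^(m-1) = \<bar>x i\<bar> * \<bar>x i\<bar>^(m-1)"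
    proof -
      have "x i * x i^(m-1) = x i ^ m" by (simp add: k)
      also have "\<dots> = \<bar>x i\<bar>^m" using m(2) by (simp add: power_even_abs)
      also have "\<dots> = \<bar>x i\<bar> * \<bar>x i\<bar>^(m-1)" by (simp add: k)
      finally show ?thesis .
    qed
    have "x i * (diag T m i * x i^(m-1) + off) \<le> 0" using H False ta by simp
    moreover have "x i * (diag T m i * x i^(m-1) + off) = diag T m i * (x i * x i^(m-1)) + x i * off"
      by (simp only: distrib_left mult.assoc mult.left_commute)
    ultimately have "\<bar>x i\<bar> * (\<bar>x i\<bar>^(m-1) * diag T m i) \<le> - (x i * off)" 
      unfolding xm by (simp only: mult.assoc mult.commute mult.left_commute)
    also have "\<dots> \<le> \<bar>x i * off\<bar>" by (rule abs_ge_minus_self)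
    also have "\<dots> = \<bar>x i\<bar> * \<bar>off\<bar>" by (rule abs_mult)
    also have "\<dots> \<le> \<bar>x i\<bar> * ?R" using offb by (simp add: mult_left_mono)
    finally show ?thesis using False by simp
  qed
qed

lemma prod_list_nonneg': "(\<And>k. k \<in> set js \<Longrightarrow> 0 \<le> c k) \<Longrightarrow> 0 \<le> prod_list (map c js)" for c :: "nat \<Rightarrow> real"
  by (induct js) auto

lemma prod_list_one: "prod_list (map (\<lambda>_. 1::real) js) = 1"
  by (induct js) auto

lemma prod_bound:
  fixes x c :: "nat \<Rightarrow> real"
  assumes "set js \<subseteq> S" "\<forall>k\<in>S. \<bar>x k\<bar> \<le> c k * M" "\<forall>k\<in>S. 0 \<le> c k" "0 \<le> M"
  shows "prod_list (map (\<lambda>k. \<bar>x k\<bar>) js) \<le> prod_list (map c js) * M ^ length js"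
  using assms(1)
proof (induct js)
  case Nil then show ?case by simp
next
  case (Cons a js)
  then have a: "\<bar>x a\<bar> \<le> c a * M" "a \<in> S" and IH: "prod_list (map (\<lambda>k. \<bar>x k\<bar>) js) \<le> prod_list (map c js) * M ^ length js"
    using assms by auto
  have "\<bar>x a\<bar> * prod_list (map (\<lambda>k. \<bar>x k\<bar>) js) \<le> (c a * M) * (prod_list (map c js) * M ^ length js)"
    by (rule mult_mono[OF a(1) IH]) (use assms a(2) in \<open>auto intro: mult_nonneg_nonneg prod_list_nonneg'\<close>)
  then show ?case by (simp add: algebra_simps)
qed

lemma root_bound:
  fixes a b M :: real and p :: nat
  assumes "0 \<le> a" "0 \<le> b" "0 \<le> M" "p > 0" "a ^ p \<le> b * M ^ p"
  shows "a \<le> b powr (1 / real p) * M"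
proof (rule ccontr)
  assume "\<not> ?thesis"
  then have lt: "b powr (1 / real p) * M < a" by simp
  have "(b powr (1 / real p) * M) ^ p < a ^ p"
    by (rule power_strict_mono[OF lt]) (use assms in auto)
  moreover have "(b powr (1 / real p)) ^ p = b"
  proof (cases "b = 0")
    case True then show ?thesis using assms by simp
  next
    case False
    then have "(b powr (1 / real p)) ^ p = (b powr (1 / real p)) powr real p"
      using assms by (simp add: powr_realpow)
    also have "\<dots> = b" using assms False by (simp add: powr_powr)
    finally show ?thesis .
  qed
  ultimately show False using assms by (simp add: power_mult_distrib)
qed

lemma Lambda_nonneg: "m \<ge> 2 \<Longrightarrow> 1 \<le> i \<Longrightarrow> 0 \<le> Lambda T m n i"
  by (subst Lambda_eq) (auto intro!: add_nonneg_nonneg sum_nonneg mult_nonneg_nonneg prod_list_nonneg')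

lemma main_bound:
  fixes x :: "nat \<Rightarrow> real"
  assumes m: "m \<ge> 2" "even m" and dp: "\<forall>i\<in>{1..n}. diag T m i > 0"
    and H: "\<forall>j\<in>{1..n}. x j \<noteq> 0 \<longrightarrow> x j * tensor_apply T m n x j \<le> 0"
    and Mb: "\<forall>k\<in>{1..n}. \<bar>x k\<bar> \<le> M"
  shows "i \<in> {1..n} \<Longrightarrow> \<bar>x i\<bar>^(m-1) * diag T m i \<le> Lambda T m n i * M^(m-1)"
proof (induct i rule: less_induct)
  case (less i)
  have M0: "0 \<le> M" using Mb less.prems by (meson abs_ge_zero order_trans)
  define c where "c = (\<lambda>j. (Lambda T m n j / \<bar>diag T m j\<bar>) powr (1 / real (m - 1)))"
  have c0: "\<forall>k\<in>{1..i-1}. 0 \<le> c k" by (simp add: c_def)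
  have xc: "\<forall>k\<in>{1..i-1}. \<bar>x k\<bar> \<le> c k * M"
  proof
    fix k assume k: "k \<in> {1..i-1}"
    then have kn: "k \<in> {1..n}" "k < i" using less.prems by auto
    have dk: "diag T m k > 0" using dp kn by auto
    have "\<bar>x k\<bar>^(m-1) * diag T m k \<le> Lambda T m n k * M^(m-1)" using less.hyps kn by auto
    then have "\<bar>x k\<bar>^(m-1) \<le> (Lambda T m n k / \<bar>diag T m k\<bar>) * M^(m-1)"
      using dk by (simp add: field_simps)
    then show "\<bar>x k\<bar> \<le> c k * M" unfolding c_def
      by (intro root_bound) (use m M0 dk kn Lambda_nonneg[of m k T n] in auto)
  qed
  define A where "A = tuples (m-1) (i-1)"
  define B where "B = tuples (m-1) n - A - {replicate (m-1) i}"
  have AB: "tuples (m-1) n - {replicate (m-1) i} = A \<union> B"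
  proof -
    have "A \<subseteq> tuples (m-1) n" using less.prems by (fastforce simp: A_def tuples_def)
    moreover have "replicate (m-1) i \<notin> A" using m less.prems by (auto simp: A_def tuples_def)
    ultimately show ?thesis by (auto simp: B_def)
  qed
  have disj: "A \<inter> B = {}" by (auto simp: B_def)
  have fA: "finite A" "finite B" using finite_tuples by (auto simp: A_def B_def)
  let ?f = "\<lambda>js. \<bar>T (i#js)\<bar> * prod_list (map (\<lambda>k. \<bar>x k\<bar>) js)"
  have "\<bar>x i\<bar>^(m-1) * diag T m i \<le> sum ?f (tuples (m-1) n - {replicate (m-1) i})"
    using row_bound[OF m _ less.prems, of T x] dp H less.prems by auto
  also have "\<dots> = sum ?f A + sum ?f B" unfolding AB by (rule sum.union_disjoint[OF fA disj])
  also have "sum ?f A \<le> (\<Sum>js\<in>A. \<bar>T (i#js)\<bar> * prod_list (map c js)) * M^(m-1)"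
    unfolding sum_distrib_right mult.assoc
  proof (rule sum_mono, rule mult_left_mono)
    fix js assume "js \<in> A"
    then have "set js \<subseteq> {1..i-1}" "length js = m - 1" by (auto simp: A_def tuples_def)
    then show "prod_list (map (\<lambda>k. \<bar>x k\<bar>) js) \<le> prod_list (map c js) * M^(m-1)"
      using prod_bound[OF _ xc c0 M0] by metis
  qed simp
  also have "sum ?f B \<le> (\<Sum>js\<in>B. \<bar>T (i#js)\<bar>) * M^(m-1)"
    unfolding sum_distrib_right
  proof (rule sum_mono, rule mult_left_mono)
    fix js assume "js \<in> B"
    then have "set js \<subseteq> {1..n}" "length js = m - 1" by (auto simp: B_def tuples_def)
    then show "prod_list (map (\<lambda>k. \<bar>x k\<bar>) js) \<le> M^(m-1)"
      using prod_bound[OF _ _ _ M0, of js "{1..n}" x "\<lambda>_. 1"] Mb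
        prod_list_one[of js] by simp
  qed simp
  also have "(\<Sum>js\<in>A. \<bar>T (i#js)\<bar> * prod_list (map c js)) * M^(m-1) + (\<Sum>js\<in>B. \<bar>T (i#js)\<bar>) * M^(m-1)
      = Lambda T m n i * M^(m-1)"
    using Lambda_eq[OF m(1), of i T n] less.prems by (simp add: A_def B_def c_def algebra_simps)
  finally show ?case by simp
qed

theorem mainTheorem1:
  fixes T :: "nat list \<Rightarrow> real" and m n :: nat
  assumes "even m" and "m \<ge> 2" and "n \<ge> 1"
    and "is_Nekrasov T m n" and "is_Z_tensor T m n"
    and "\<forall>i\<in>{1..n}. diag T m i > 0"
  shows "is_P_tensor T m n"
  unfolding is_P_tensor_def
proof (intro allI impI)
  fix x :: "nat \<Rightarrow> real"
  assume ex: "\<exists>i\<in>{1..n}. x i \<noteq> 0"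
  show "\<exists>j\<in>{1..n}. x j \<noteq> 0 \<and> x j * tensor_apply T m n x j > 0"
  proof (rule ccontr)
    assume "\<not> ?thesis"
    then have H: "\<forall>j\<in>{1..n}. x j \<noteq> 0 \<longrightarrow> x j * tensor_apply T m n x j \<le> 0" by auto
    define M where "M = Max ((\<lambda>i. \<bar>x i\<bar>) ` {1..n})"
    have ne: "(\<lambda>i. \<bar>x i\<bar>) ` {1..n} \<noteq> {}" using assms(3) by auto
    have Mb: "\<forall>k\<in>{1..n}. \<bar>x k\<bar> \<le> M" unfolding M_def by auto
    obtain i0 where i0: "i0 \<in> {1..n}" "\<bar>x i0\<bar> = M"
      using Max_in[OF _ ne] unfolding M_def by auto
    obtain i1 where i1: "i1 \<in> {1..n}" "x i1 \<noteq> 0" using ex by auto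
    have Mpos: "M > 0" using Mb i1 by (meson zero_less_abs_iff less_le_trans)
    have d: "diag T m i0 > 0" using assms(6) i0 by auto
    have "Lambda T m n i0 < \<bar>diag T m i0\<bar>" using assms(4) i0 unfolding is_Nekrasov_def by auto
    then have L: "Lambda T m n i0 < diag T m i0" using d by simp
    have "M^(m-1) * diag T m i0 \<le> Lambda T m n i0 * M^(m-1)"
      using main_bound[OF assms(2,1,6) H Mb i0(1)] i0 by simp
    moreover have "Lambda T m n i0 * M^(m-1) < diag T m i0 * M^(m-1)"
      using L Mpos by simp
    ultimately show False by (simp add: mult.commute)
  qed
qed

end
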